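(* Let $K_n$ be the complete graph on $n$ vertices and let $k$ be a positive integer with $k\leq n-1$. Then $\gamma_{gr}^{k}(K_n)=k$, $\gamma_{gr}^{L,k}(K_n)=k+1$, $\gamma_{gr}^{Z,k}(K_n)=k$, and $\gamma_{gr}^{t,k}(K_n)=k+1$.
   Context: For a vertex $v$, $N(v)$ is its open neighborhood and $N[v]=N(v)\cup\{v\}$. A sequence $S=(v_1,\ldots,v_m)$ of distinct vertices is a $k$-sequence (resp. $k$-$L$-sequence, $k$-$Z$-sequence, $k$-$t$-sequence) if for each $i\in[m]$ there is a vertex $u_i$ with $u_i\in N[v_i]$ (resp. $N[v_i]$, $N(v_i)$, $N(v_i)$) such that the number of indices $j<i$ with $u_i\in N[v_j]$ (resp. $N(v_j)$, $N[v_j]$, $N(v_j)$) is less than $k$. The numbers $\gamma_{gr}^{k}(G)$, $\gamma_{gr}^{L,k}(G)$, $\gamma_{gr}^{Z,k}(G)$, $\gamma_{gr}^{t,k}(G)$ are the maximum lengths of such sequences, respectively. *)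

theory Defs
  imports Main
begin

definition open_nbhd :: "'a set \<Rightarrow> ('a \<Rightarrow> 'a \<Rightarrow> bool) \<Rightarrow> 'a \<Rightarrow> 'a set" where
  "open_nbhd V E v = {u \<in> V. E v u}"

definition closed_nbhd :: "'a set \<Rightarrow> ('a \<Rightarrow> 'a \<Rightarrow> bool) \<Rightarrow> 'a \<Rightarrow> 'a set" where
  "closed_nbhd V E v = insert v (open_nbhd V E v)"

definition gen_seq ::
  "('a \<Rightarrow> 'a set) \<Rightarrow> ('a \<Rightarrow> 'a set) \<Rightarrow> nat \<Rightarrow> 'a set \<Rightarrow> 'a list \<Rightarrow> bool" where
  "gen_seq N1 N2 k V S \<longleftrightarrow> distinct S \<and> set S \<subseteq> V \<and>
     (\<forall>i < length S. \<exists>u. u \<in> N1 (S ! i) \<and> card {j. j < i \<and> u \<in> N2 (S ! j)} < k)"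

definition k_seq where
  "k_seq V E k S = gen_seq (closed_nbhd V E) (closed_nbhd V E) k V S"
definition kL_seq where
  "kL_seq V E k S = gen_seq (closed_nbhd V E) (open_nbhd V E) k V S"
definition kZ_seq where
  "kZ_seq V E k S = gen_seq (open_nbhd V E) (closed_nbhd V E) k V S"
definition kt_seq where
  "kt_seq V E k S = gen_seq (open_nbhd V E) (open_nbhd V E) k V S"

definition gamma_gr where
  "gamma_gr V E k = Max {length S | S. k_seq V E k S}"
definition gamma_gr_L where
  "gamma_gr_L V E k = Max {length S | S. kL_seq V E k S}"
definition gamma_gr_Z where
  "gamma_gr_Z V E k = Max {length S | S. kZ_seq V E k S}"
definition gamma_gr_t where
  "gamma_gr_t V E k = Max {length S | S. kt_seq V E k S}"

definition Kn_V :: "nat \<Rightarrow> nat set" where "Kn_V n = {0..<n}"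
definition Kn_E :: "nat \<Rightarrow> nat \<Rightarrow> bool" where "Kn_E x y \<longleftrightarrow> x \<noteq> y"

end

theory Submission
  imports Defs
begin

lemma max_eq:
  assumes "P S0" "length S0 = m" "\<And>S. P S \<Longrightarrow> length S \<le> m"
  shows "Max {length S | S. P S} = m"
proof (rule Max_eqI)
  show "finite {length S | S. P S}"
    by (rule finite_subset[of _ "{..m}"]) (auto dest: assms(3))
  show "m \<in> {length S | S. P S}" using assms by blast
qed (auto dest: assms(3))

lemma cn: "v < n \<Longrightarrow> closed_nbhd {0..<n} Kn_E v = {0..<n}"
  by (auto simp: closed_nbhd_def open_nbhd_def Kn_E_def)

lemma on: "open_nbhd {0..<n} Kn_E v = {0..<n} - {v}"
  by (auto simp: open_nbhd_def Kn_E_def)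

lemma card_excl:
  assumes "distinct S" "m < length S"
  shows "m - 1 \<le> card {j. j < m \<and> u \<noteq> S ! j}"
proof (cases "\<exists>j0<m. S ! j0 = u")
  case True
  then obtain j0 where j0: "j0 < m" "S ! j0 = u" by blast
  have "{j. j < m \<and> u \<noteq> S ! j} = {..<m} - {j0}"
    using j0 assms nth_eq_iff_index_eq by fastforce
  then show ?thesis using j0 by simp
next
  case False
  then have "{j. j < m \<and> u \<noteq> S ! j} = {..<m}" by auto
  then show ?thesis by simp
qed

lemma setI: "set S \<subseteq> {0..<n} \<Longrightarrow> i < length S \<Longrightarrow> S ! i < n"
  using nth_mem by fastforce

theorem mainTheorem6:
  fixes n k :: nat
  assumes "1 \<le> k" and "k \<le> n - 1"
  shows "gamma_gr (Kn_V n) Kn_E k = k \<and> gamma_gr_L (Kn_V n) Kn_E k = k + 1 \<and>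
         gamma_gr_Z (Kn_V n) Kn_E k = k \<and> gamma_gr_t (Kn_V n) Kn_E k = k + 1"
proof -
  have n: "k + 1 \<le> n" "2 \<le> n" using assms by auto
  have A: "gamma_gr (Kn_V n) Kn_E k = k"
    unfolding gamma_gr_def
  proof (rule max_eq[of _ "[0..<k]"])
    show "k_seq (Kn_V n) Kn_E k [0..<k]"
      unfolding k_seq_def gen_seq_def Kn_V_def using n
    proof (auto simp: cn)
      fix i assume i: "i < k"
      have "{j. j < i \<and> 0 \<in> closed_nbhd {0..<n} Kn_E ([0..<k] ! j)} = {..<i}"
        using i n by (auto simp: cn)
      thus "\<exists>u<n. card {j. j < i \<and> u \<in> closed_nbhd {0..<n} Kn_E ([0..<k] ! j)} < k"
        using i n by (intro exI[of _ 0]) auto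
    qed
  next
    fix S assume "k_seq (Kn_V n) Kn_E k S"
    hence d: "distinct S" "set S \<subseteq> {0..<n}" and
      c: "\<And>i. i < length S \<Longrightarrow> \<exists>u. u \<in> closed_nbhd {0..<n} Kn_E (S ! i) \<and>
           card {j. j < i \<and> u \<in> closed_nbhd {0..<n} Kn_E (S ! j)} < k"
      unfolding k_seq_def gen_seq_def Kn_V_def by auto
    show "length S \<le> k"
    proof (rule ccontr)
      assume "\<not> ?thesis"
      hence l: "k < length S" by simp
      then obtain u where u: "u \<in> closed_nbhd {0..<n} Kn_E (S ! k)"
        "card {j. j < k \<and> u \<in> closed_nbhd {0..<n} Kn_E (S ! j)} < k" using c by blast
      have "u < n" using u(1) cn[OF setI[OF d(2) l]] by auto
      hence "{j. j < k \<and> u \<in> closed_nbhd {0..<n} Kn_E (S ! j)} = {..<k}"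
        using cn setI[OF d(2)] l by auto
      thus False using u(2) by simp
    qed
  qed simp
  have C: "gamma_gr_Z (Kn_V n) Kn_E k = k"
    unfolding gamma_gr_Z_def
  proof (rule max_eq[of _ "[0..<k]"])
    show "kZ_seq (Kn_V n) Kn_E k [0..<k]"
    proof -
      have "\<forall>i<length [0..<k]. \<exists>u. u \<in> open_nbhd {0..<n} Kn_E ([0..<k] ! i) \<and>
          card {j. j < i \<and> u \<in> closed_nbhd {0..<n} Kn_E ([0..<k] ! j)} < k"
      proof (intro allI impI)
        fix i assume i: "i < length [0..<k]"
        hence i': "i < k" by simp
        let ?u = "if i = 0 then 1 else (0::nat)"
        have e: "{j. j < i \<and> ?u \<in> closed_nbhd {0..<n} Kn_E ([0..<k] ! j)} = {..<i}"
          using i' n by (auto simp: cn)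
        have "?u \<in> open_nbhd {0..<n} Kn_E ([0..<k] ! i)" using i' n by (simp add: on)
        thus "\<exists>u. u \<in> open_nbhd {0..<n} Kn_E ([0..<k] ! i) \<and>
          card {j. j < i \<and> u \<in> closed_nbhd {0..<n} Kn_E ([0..<k] ! j)} < k"
          using e i' by (intro exI[of _ ?u]) simp
      qed
      moreover have "distinct [0..<k]" "set [0..<k] \<subseteq> {0..<n}" using n by auto
      ultimately show ?thesis unfolding kZ_seq_def gen_seq_def Kn_V_def by blast
    qed
  next
    fix S assume "kZ_seq (Kn_V n) Kn_E k S"
    hence d: "distinct S" "set S \<subseteq> {0..<n}" and
      c: "\<And>i. i < length S \<Longrightarrow> \<exists>u. u \<in> open_nbhd {0..<n} Kn_E (S ! i) \<and>
           card {j. j < i \<and> u \<in> closed_nbhd {0..<n} Kn_E (S ! j)} < k"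
      unfolding kZ_seq_def gen_seq_def Kn_V_def by auto
    show "length S \<le> k"
    proof (rule ccontr)
      assume "\<not> ?thesis"
      hence l: "k < length S" by simp
      then obtain u where u: "u \<in> open_nbhd {0..<n} Kn_E (S ! k)"
        "card {j. j < k \<and> u \<in> closed_nbhd {0..<n} Kn_E (S ! j)} < k" using c by blast
      have "u < n" using u(1) on by auto
      hence "{j. j < k \<and> u \<in> closed_nbhd {0..<n} Kn_E (S ! j)} = {..<k}"
        using cn setI[OF d(2)] l by auto
      thus False using u(2) by simp
    qed
  qed simp
  have B: "gamma_gr_L (Kn_V n) Kn_E k = k + 1"
    unfolding gamma_gr_L_def
  proof (rule max_eq[of _ "[0..<k+1]"])
    show "kL_seq (Kn_V n) Kn_E k [0..<k+1]"
    proof -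
      have "\<forall>i<length [0..<k+1]. \<exists>u. u \<in> closed_nbhd {0..<n} Kn_E ([0..<k+1] ! i) \<and>
          card {j. j < i \<and> u \<in> open_nbhd {0..<n} Kn_E ([0..<k+1] ! j)} < k"
      proof (intro allI impI)
        fix i assume i: "i < length [0..<k+1]"
        hence i': "i < k + 1" by simp
        have e: "{j. j < i \<and> 0 \<in> open_nbhd {0..<n} Kn_E ([0..<k+1] ! j)} = {j. j < i \<and> 0 < n \<and> 0 \<noteq> j}"
          using i' by (auto simp: on simp del: upt_Suc)
        have "{j. j < i \<and> 0 < n \<and> 0 \<noteq> j} \<subseteq> {1..<i}" by auto
        hence "card {j. j < i \<and> 0 < n \<and> 0 \<noteq> j} \<le> i - 1"
          by (metis card_atLeastLessThan card_mono finite_atLeastLessThan)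
        hence "card {j. j < i \<and> 0 \<in> open_nbhd {0..<n} Kn_E ([0..<k+1] ! j)} < k"
          using i' assms(1) e by simp
        moreover have "0 \<in> closed_nbhd {0..<n} Kn_E ([0..<k+1] ! i)" using i' n
          by (simp add: cn del: upt_Suc)
        ultimately show "\<exists>u. u \<in> closed_nbhd {0..<n} Kn_E ([0..<k+1] ! i) \<and>
          card {j. j < i \<and> u \<in> open_nbhd {0..<n} Kn_E ([0..<k+1] ! j)} < k" by blast
      qed
      moreover have "distinct [0..<k+1]" "set [0..<k+1] \<subseteq> {0..<n}" using n by auto
      ultimately show ?thesis unfolding kL_seq_def gen_seq_def Kn_V_def by blast
    qed
  next
    fix S assume "kL_seq (Kn_V n) Kn_E k S"
    hence d: "distinct S" "set S \<subseteq> {0..<n}" and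
      c: "\<And>i. i < length S \<Longrightarrow> \<exists>u. u \<in> closed_nbhd {0..<n} Kn_E (S ! i) \<and>
           card {j. j < i \<and> u \<in> open_nbhd {0..<n} Kn_E (S ! j)} < k"
      unfolding kL_seq_def gen_seq_def Kn_V_def by auto
    show "length S \<le> k + 1"
    proof (rule ccontr)
      assume "\<not> ?thesis"
      hence l: "k + 1 < length S" by simp
      then obtain u where u: "u \<in> closed_nbhd {0..<n} Kn_E (S ! (k+1))"
        "card {j. j < k + 1 \<and> u \<in> open_nbhd {0..<n} Kn_E (S ! j)} < k" using c by blast
      have "u < n" using u(1) cn[OF setI[OF d(2) l]] by auto
      hence "{j. j < k + 1 \<and> u \<in> open_nbhd {0..<n} Kn_E (S ! j)} = {j. j < k + 1 \<and> u \<noteq> S ! j}"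
        by (auto simp: on)
      thus False using u(2) card_excl[OF d(1) l, of u] by simp
    qed
  qed simp
  have D: "gamma_gr_t (Kn_V n) Kn_E k = k + 1"
    unfolding gamma_gr_t_def
  proof (rule max_eq[of _ "[0..<k+1]"])
    show "kt_seq (Kn_V n) Kn_E k [0..<k+1]"
    proof -
      have "\<forall>i<length [0..<k+1]. \<exists>u. u \<in> open_nbhd {0..<n} Kn_E ([0..<k+1] ! i) \<and>
          card {j. j < i \<and> u \<in> open_nbhd {0..<n} Kn_E ([0..<k+1] ! j)} < k"
      proof (intro allI impI)
        fix i assume i: "i < length [0..<k+1]"
        hence i': "i < k + 1" by simp
        show "\<exists>u. u \<in> open_nbhd {0..<n} Kn_E ([0..<k+1] ! i) \<and>
          card {j. j < i \<and> u \<in> open_nbhd {0..<n} Kn_E ([0..<k+1] ! j)} < k"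
        proof (cases "i = 0")
          case True
          have "1 \<in> open_nbhd {0..<n} Kn_E ([0..<k+1] ! i)" using True n
            by (simp add: on del: upt_Suc)
          thus ?thesis using True assms(1) by auto
        next
          case False
          have e: "{j. j < i \<and> 0 \<in> open_nbhd {0..<n} Kn_E ([0..<k+1] ! j)} = {j. j < i \<and> 0 < n \<and> 0 \<noteq> j}"
            using i' by (auto simp: on simp del: upt_Suc)
          have "{j. j < i \<and> 0 < n \<and> 0 \<noteq> j} \<subseteq> {1..<i}" by auto
          hence "card {j. j < i \<and> 0 < n \<and> (0::nat) \<noteq> j} \<le> i - 1"
            by (metis card_atLeastLessThan card_mono finite_atLeastLessThan)
          hence "card {j. j < i \<and> 0 \<in> open_nbhd {0..<n} Kn_E ([0..<k+1] ! j)} < k"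
            using i' assms(1) e by simp
          moreover have "0 \<in> open_nbhd {0..<n} Kn_E ([0..<k+1] ! i)" using i' n False
            by (simp add: on del: upt_Suc)
          ultimately show ?thesis by blast
        qed
      qed
      moreover have "distinct [0..<k+1]" "set [0..<k+1] \<subseteq> {0..<n}" using n by auto
      ultimately show ?thesis unfolding kt_seq_def gen_seq_def Kn_V_def by blast
    qed
  next
    fix S assume "kt_seq (Kn_V n) Kn_E k S"
    hence d: "distinct S" "set S \<subseteq> {0..<n}" and
      c: "\<And>i. i < length S \<Longrightarrow> \<exists>u. u \<in> open_nbhd {0..<n} Kn_E (S ! i) \<and>
           card {j. j < i \<and> u \<in> open_nbhd {0..<n} Kn_E (S ! j)} < k"
      unfolding kt_seq_def gen_seq_def Kn_V_def by auto
    show "length S \<le> k + 1"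
    proof (rule ccontr)
      assume "\<not> ?thesis"
      hence l: "k + 1 < length S" by simp
      then obtain u where u: "u \<in> open_nbhd {0..<n} Kn_E (S ! (k+1))"
        "card {j. j < k + 1 \<and> u \<in> open_nbhd {0..<n} Kn_E (S ! j)} < k" using c by blast
      have "u < n" using u(1) on by auto
      hence "{j. j < k + 1 \<and> u \<in> open_nbhd {0..<n} Kn_E (S ! j)} = {j. j < k + 1 \<and> u \<noteq> S ! j}"
        by (auto simp: on)
      thus False using u(2) card_excl[OF d(1) l, of u] by simp
    qed
  qed simp
  show ?thesis using A B C D by simp
qed

end
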